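(* Let $F$ be a $p$-rigid field ($p$ odd, $F$ containing a primitive $p$th root of unity), let $a\in\dot F\setminus\dot F^p$ and $E=F(\sqrt[p]{a})$. Let $\epsilon\colon\dot F/\dot F^p\to\dot E/\dot E^p$ be the homomorphism induced by the inclusion $F\hookrightarrow E$. Then, as $\mathbb F_p$-vector spaces, $$\dot E/\dot E^p=\big\langle[\sqrt[p]{a}]_E\big\rangle\oplus\epsilon\big(\dot F/\dot F^p\big).$$
   Context: For a field $L$, $\dot L=L\setminus\{0\}$, $\dot L^p$ is the group of nonzero $p$th powers and $[x]_L=x\dot L^p$. An element $a\in\dot F\setminus\dot F^p$ is $p$-rigid if every element of $N_{F(\sqrt[p]{a})/F}(F(\sqrt[p]{a})^\times)$ lies in $\bigcup_{k=0}^{p-1}a^k\dot F^p$; $F$ is $p$-rigid if every element of $\dot F\setminus\dot F^p$ is $p$-rigid. *)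

theory Defs
  imports "HOL-Computational_Algebra.Primes" "Jordan_Normal_Form.Determinant"
begin

text \<open>Fields are modelled as subfields of an ambient field of type 'a.\<close>

definition subfield_of :: "'a::field set \<Rightarrow> bool" where
  "subfield_of K \<longleftrightarrow> 0 \<in> K \<and> 1 \<in> K \<and>
     (\<forall>x\<in>K. \<forall>y\<in>K. x + y \<in> K \<and> x * y \<in> K) \<and>
     (\<forall>x\<in>K. - x \<in> K \<and> inverse x \<in> K)"

definition adjoin :: "'a::field set \<Rightarrow> 'a \<Rightarrow> 'a set" where
  "adjoin K \<alpha> = \<Inter> {L. subfield_of L \<and> K \<subseteq> L \<and> \<alpha> \<in> L}"

definition pth_powers :: "'a::field set \<Rightarrow> nat \<Rightarrow> 'a set" where
  "pth_powers L p = (\<lambda>y. y ^ p) ` (L - {0})"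

definition pclass :: "'a::field set \<Rightarrow> nat \<Rightarrow> 'a \<Rightarrow> 'a set" where
  "pclass L p x = (\<lambda>y. x * y ^ p) ` (L - {0})"

definition has_primitive_root_of_unity :: "'a::field set \<Rightarrow> nat \<Rightarrow> bool" where
  "has_primitive_root_of_unity K p \<longleftrightarrow>
     (\<exists>\<zeta>\<in>K. \<zeta> ^ p = 1 \<and> (\<forall>k. 0 < k \<and> k < p \<longrightarrow> \<zeta> ^ k \<noteq> 1))"

text \<open>Matrix of multiplication by x = sum_{i<p} c_i theta^i on K(theta), theta^p = b,
  w.r.t. the K-basis 1, theta, ..., theta^(p-1).  Its determinant is the field norm
  N_{K(theta)/K}(x) (for b not a p-th power, p prime, K(theta) has degree p).\<close>
definition kummer_mult_mat :: "nat \<Rightarrow> 'a::field \<Rightarrow> (nat \<Rightarrow> 'a) \<Rightarrow> 'a mat" where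
  "kummer_mult_mat p b c =
     mat p p (\<lambda>(i, j). if j \<le> i then c (i - j) else b * c (p + i - j))"

text \<open>The norm group N_{K(b^(1/p))/K}(K(b^(1/p))^x): norms of the nonzero elements.\<close>
definition norm_group :: "'a::field set \<Rightarrow> nat \<Rightarrow> 'a \<Rightarrow> 'a set" where
  "norm_group K p b =
     {det (kummer_mult_mat p b c) | c. (\<forall>i<p. c i \<in> K) \<and> (\<exists>i<p. c i \<noteq> 0)}"

definition p_rigid_elt :: "'a::field set \<Rightarrow> nat \<Rightarrow> 'a \<Rightarrow> bool" where
  "p_rigid_elt K p b \<longleftrightarrow> b \<in> K - {0} \<and> b \<notin> pth_powers K p \<and>
     norm_group K p b \<subseteq> (\<Union>k<p. (\<lambda>y. b ^ k * y) ` pth_powers K p)"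

definition p_rigid :: "'a::field set \<Rightarrow> nat \<Rightarrow> bool" where
  "p_rigid K p \<longleftrightarrow> (\<forall>b \<in> K - {0} - pth_powers K p. p_rigid_elt K p b)"

end

theory Submission imports Defs begin

lemma sf0: "subfield_of L \<Longrightarrow> 0 \<in> L" by (simp add: subfield_of_def)
lemma sf1: "subfield_of L \<Longrightarrow> 1 \<in> L" by (simp add: subfield_of_def)
lemma sfadd: "subfield_of L \<Longrightarrow> x \<in> L \<Longrightarrow> y \<in> L \<Longrightarrow> x + y \<in> L" by (simp add: subfield_of_def)
lemma sfmult: "subfield_of L \<Longrightarrow> x \<in> L \<Longrightarrow> y \<in> L \<Longrightarrow> x * y \<in> L" by (simp add: subfield_of_def)
lemma sfuminus: "subfield_of L \<Longrightarrow> x \<in> L \<Longrightarrow> - x \<in> L" by (simp add: subfield_of_def)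
lemma sfinv: "subfield_of L \<Longrightarrow> x \<in> L \<Longrightarrow> inverse x \<in> L" by (simp add: subfield_of_def)
lemma sfdiff: "subfield_of L \<Longrightarrow> x \<in> L \<Longrightarrow> y \<in> L \<Longrightarrow> x - y \<in> L"
  using sfadd sfuminus by (metis diff_conv_add_uminus)
lemma sfdiv: "subfield_of L \<Longrightarrow> x \<in> L \<Longrightarrow> y \<in> L \<Longrightarrow> x / y \<in> L"
  using sfmult sfinv by (metis divide_inverse)
lemma sfpow: "subfield_of L \<Longrightarrow> x \<in> L \<Longrightarrow> x ^ n \<in> L"
  by (induction n) (auto intro: sf1 sfmult)
lemma sfpowi: "subfield_of L \<Longrightarrow> x \<in> L \<Longrightarrow> power_int x n \<in> L"
  by (cases "n \<ge> 0") (auto simp: power_int_def intro: sfpow sfinv)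
lemma sfsum: "subfield_of L \<Longrightarrow> (\<And>i. i \<in> A \<Longrightarrow> f i \<in> L) \<Longrightarrow> sum f A \<in> L"
  by (induction A rule: infinite_finite_induct) (auto intro: sf0 sfadd)
lemma sfprod: "subfield_of L \<Longrightarrow> (\<And>i. i \<in> A \<Longrightarrow> f i \<in> L) \<Longrightarrow> prod f A \<in> L"
  by (induction A rule: infinite_finite_induct) (auto intro: sf1 sfmult)
lemma sfnat: "subfield_of L \<Longrightarrow> of_nat n \<in> L"
  by (induction n) (auto intro: sf0 sf1 sfadd)

locale kum =
  fixes F :: "'a::field set" and p :: nat and a \<alpha> \<zeta> :: 'a
  assumes sub: "subfield_of F" and prime: "prime p" and odd: "odd p"
    and zF: "\<zeta> \<in> F" and zp: "\<zeta> ^ p = 1" and zprim: "\<And>k. 0 < k \<Longrightarrow> k < p \<Longrightarrow> \<zeta> ^ k \<noteq> 1"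
    and rig: "p_rigid F p" and aF: "a \<in> F" and a0: "a \<noteq> 0" and anp: "a \<notin> pth_powers F p"
    and alp: "\<alpha> ^ p = a"
begin

lemma p2: "p \<ge> 2" using prime prime_ge_2_nat by blast
lemma p3: "p \<ge> 3" using p2 odd by (cases "p = 2") auto

lemma z0: "\<zeta> \<noteq> 0"
proof
  assume "\<zeta> = 0"
  hence "\<zeta> ^ p = 0" using p2 by simp
  with zp show False by simp
qed
lemma al0: "\<alpha> \<noteq> 0" using alp a0 p2 by auto

lemma zpow_mod: "\<zeta> ^ m = \<zeta> ^ (m mod p)"
proof -
  have e: "m = p * (m div p) + m mod p" by simp
  have "\<zeta> ^ m = \<zeta> ^ (p * (m div p) + m mod p)" using e by metis
  also have "\<dots> = \<zeta> ^ (m mod p)" unfolding power_add power_mult zp by simp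
  finally show ?thesis .
qed

lemma zpow_eq1: "\<zeta> ^ m = 1 \<longleftrightarrow> p dvd m"
proof
  assume "\<zeta> ^ m = 1"
  hence "\<zeta> ^ (m mod p) = 1" using zpow_mod by simp
  moreover have "m mod p < p" using p2 by simp
  ultimately have "m mod p = 0" using zprim by (metis bot_nat_0.not_eq_extremum)
  thus "p dvd m" by presburger
next
  assume "p dvd m" then obtain t where "m = p * t" by auto
  thus "\<zeta> ^ m = 1" by (simp add: power_mult zp)
qed

lemma geom: "(\<Sum>j<p. (\<zeta> ^ m) ^ j) = (if p dvd m then of_nat p else 0)"
proof (cases "p dvd m")
  case True
  hence "\<zeta> ^ m = 1" using zpow_eq1 by simp
  then show ?thesis using True by simp
next
  case False
  hence ne: "\<zeta> ^ m \<noteq> 1" using zpow_eq1 by simp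
  have "(\<zeta> ^ m) ^ p = 1" by (metis power_mult mult.commute zp power_one)
  hence "(\<Sum>j<p. (\<zeta> ^ m) ^ j) = 0" using ne by (simp add: geometric_sum)
  thus ?thesis using False by simp
qed

lemma pne0: "(of_nat p :: 'a) \<noteq> 0"
proof
  assume h: "(of_nat p :: 'a) = 0"
  have e0: "(\<zeta> - 1) ^ p = (\<zeta> + (- 1)) ^ p" by (simp only: diff_conv_add_uminus)
  have e1: "(\<zeta> + (- 1)) ^ p = (\<Sum>k\<le>p. of_nat (p choose k) * \<zeta> ^ k * (- 1) ^ (p - k))"
    by (rule binomial_ring)
  have e2: "(\<Sum>k\<le>p. of_nat (p choose k) * \<zeta> ^ k * (- 1::'a) ^ (p - k))
     = (\<Sum>k\<in>{0,p}. of_nat (p choose k) * \<zeta> ^ k * (- 1) ^ (p - k))"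
  proof (rule sum.mono_neutral_right)
    show "\<forall>i\<in>{..p} - {0, p}. of_nat (p choose i) * \<zeta> ^ i * (- 1) ^ (p - i) = (0::'a)"
    proof
      fix i assume i: "i \<in> {..p} - {0, p}"
      have "p dvd (p choose i)" using i prime by (intro dvd_choose_prime) auto
      then obtain t where "p choose i = p * t" by auto
      hence "(of_nat (p choose i) :: 'a) = of_nat p * of_nat t" by simp
      thus "of_nat (p choose i) * \<zeta> ^ i * (- 1) ^ (p - i) = (0::'a)" using h by simp
    qed
  qed auto
  have m1: "(- 1 :: 'a) ^ p = - 1" using odd by simp
  have e3: "(\<Sum>k\<in>{0,p}. of_nat (p choose k) * \<zeta> ^ k * (- 1::'a) ^ (p - k)) = (- 1) ^ p + \<zeta> ^ p"
    using p2 by (simp add: sum.insert)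
  have "(\<zeta> - 1) ^ p = 0" using e0 e1 e2 e3 m1 zp by simp
  hence "\<zeta> = 1" by simp
  thus False using zprim[of 1] p2 by simp
qed

end

definition qp :: "nat \<Rightarrow> (nat \<Rightarrow> 'b::field) \<Rightarrow> 'b \<Rightarrow> 'b" where
  "qp n c \<beta> = (\<Sum>i<n. c i * \<beta> ^ i)"

definition mulc :: "nat \<Rightarrow> 'b::field \<Rightarrow> (nat \<Rightarrow> 'b) \<Rightarrow> (nat \<Rightarrow> 'b) \<Rightarrow> nat \<Rightarrow> 'b" where
  "mulc n b c d i = (if i < n then (\<Sum>j<n. kummer_mult_mat n b c $$ (i, j) * d j) else 0)"

lemma KL:
  fixes \<beta> b :: "'b::field"
  assumes bp: "\<beta> ^ n = b" and j: "j < n"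
  shows "(\<Sum>i<n. kummer_mult_mat n b c $$ (i, j) * \<beta> ^ i) = qp n c \<beta> * \<beta> ^ j"
proof -
  define M where "M = kummer_mult_mat n b c"
  have Mij: "\<And>i. i < n \<Longrightarrow> M $$ (i, j) = (if j \<le> i then c (i - j) else b * c (n + i - j))"
    using j by (simp add: kummer_mult_mat_def M_def)
  have S1: "(\<Sum>i<n. M $$ (i, j) * \<beta> ^ i)
      = (\<Sum>i\<in>{0..<j}. M $$ (i, j) * \<beta> ^ i) + (\<Sum>i\<in>{j..<n}. M $$ (i, j) * \<beta> ^ i)"
    using j by (simp add: lessThan_atLeast0 sum.atLeastLessThan_concat)
  have S2: "(\<Sum>i\<in>{0..<j}. M $$ (i, j) * \<beta> ^ i) = (\<Sum>i\<in>{0..<j}. b * c (n + i - j) * \<beta> ^ i)"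
    using j Mij by (intro sum.cong) auto
  have S3: "(\<Sum>i\<in>{j..<n}. M $$ (i, j) * \<beta> ^ i) = (\<Sum>i\<in>{j..<n}. c (i - j) * \<beta> ^ i)"
    using j Mij by (intro sum.cong) auto
  have R1: "qp n c \<beta> * \<beta> ^ j = (\<Sum>m<n. c m * \<beta> ^ (m + j))"
    by (simp add: qp_def sum_distrib_right power_add mult.assoc)
  have R2: "(\<Sum>m<n. c m * \<beta> ^ (m + j)) = (\<Sum>m\<in>{0..<n-j}. c m * \<beta> ^ (m + j)) + (\<Sum>m\<in>{n-j..<n}. c m * \<beta> ^ (m + j))"
    using j by (simp add: lessThan_atLeast0 sum.atLeastLessThan_concat)
  have R3: "(\<Sum>m\<in>{0..<n-j}. c m * \<beta> ^ (m + j)) = (\<Sum>i\<in>{j..<n}. c (i - j) * \<beta> ^ i)"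
  proof -
    have "(\<Sum>i\<in>{0+j..<(n-j)+j}. c (i - j) * \<beta> ^ i) = (\<Sum>m\<in>{0..<n-j}. c (m + j - j) * \<beta> ^ (m + j))"
      by (rule sum.shift_bounds_nat_ivl)
    moreover have "(0::nat)+j = j" "(n-j)+j = n" using j by auto
    ultimately show ?thesis by simp
  qed
  have R4: "(\<Sum>m\<in>{n-j..<n}. c m * \<beta> ^ (m + j)) = (\<Sum>i\<in>{0..<j}. b * c (n + i - j) * \<beta> ^ i)"
  proof -
    have A: "(\<Sum>m\<in>{0+(n-j)..<j+(n-j)}. c m * \<beta> ^ (m + j)) = (\<Sum>i\<in>{0..<j}. c (i + (n-j)) * \<beta> ^ (i + (n - j) + j))"
      by (rule sum.shift_bounds_nat_ivl)
    have B: "(\<Sum>i\<in>{0..<j}. c (i + (n-j)) * \<beta> ^ (i + (n - j) + j)) = (\<Sum>i\<in>{0..<j}. b * c (n + i - j) * \<beta> ^ i)"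
    proof (intro sum.cong refl)
      fix i assume "i \<in> {0..<j}"
      have "i + (n - j) + j = n + i" using j by simp
      hence "\<beta> ^ (i + (n - j) + j) = b * \<beta> ^ i" using bp by (simp add: power_add)
      moreover have "i + (n - j) = n + i - j" using j by simp
      ultimately show "c (i + (n-j)) * \<beta> ^ (i + (n - j) + j) = b * c (n + i - j) * \<beta> ^ i" by simp
    qed
    have "0+(n-j) = n - j" "j+(n-j) = n" using j by auto
    thus ?thesis using A B by simp
  qed
  have X: "(\<Sum>i<n. M $$ (i, j) * \<beta> ^ i) = (\<Sum>i\<in>{0..<j}. b * c (n + i - j) * \<beta> ^ i) + (\<Sum>i\<in>{j..<n}. c (i - j) * \<beta> ^ i)"
    unfolding S1 S2 S3 by (rule refl)
  have Y: "qp n c \<beta> * \<beta> ^ j = (\<Sum>i\<in>{0..<j}. b * c (n + i - j) * \<beta> ^ i) + (\<Sum>i\<in>{j..<n}. c (i - j) * \<beta> ^ i)"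
    unfolding R1 R2 R3 R4 by (rule add.commute)
  show ?thesis unfolding M_def[symmetric] X Y by (rule refl)
qed


lemma qp_mult:
  fixes \<beta> b :: "'b::field"
  assumes bp: "\<beta> ^ n = b"
  shows "qp n c \<beta> * qp n d \<beta> = qp n (mulc n b c d) \<beta>"
proof -
  have "qp n c \<beta> * qp n d \<beta> = (\<Sum>j<n. d j * (qp n c \<beta> * \<beta> ^ j))"
    by (simp add: qp_def sum_distrib_left sum_distrib_right mult_ac)
  also have "\<dots> = (\<Sum>j<n. d j * (\<Sum>i<n. kummer_mult_mat n b c $$ (i, j) * \<beta> ^ i))"
    using KL[OF bp] by simp
  also have "\<dots> = (\<Sum>j<n. \<Sum>i<n. kummer_mult_mat n b c $$ (i, j) * d j * \<beta> ^ i)"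
    by (simp add: sum_distrib_left mult_ac)
  also have "\<dots> = (\<Sum>i<n. \<Sum>j<n. kummer_mult_mat n b c $$ (i, j) * d j * \<beta> ^ i)"
    by (rule sum.swap)
  also have "\<dots> = (\<Sum>i<n. (\<Sum>j<n. kummer_mult_mat n b c $$ (i, j) * d j) * \<beta> ^ i)"
    by (simp add: sum_distrib_right)
  also have "\<dots> = qp n (mulc n b c d) \<beta>"
    by (simp add: qp_def mulc_def)
  finally show ?thesis .
qed

lemma dvd_lemma:
  fixes i j n :: nat assumes "i < n" "j < n"
  shows "n dvd ((n - 1) * i + j) \<longleftrightarrow> i = j"
proof
  assume "i = j"
  hence "(n - 1) * i + j = n * i" using assms by (simp add: algebra_simps diff_mult_distrib)
  thus "n dvd ((n - 1) * i + j)" by simp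
next
  assume d: "n dvd ((n - 1) * i + j)"
  have e0: "(n - 1) * i + i = n * i" using assms by (cases n) auto
  have e: "(n - 1) * i + j + i = n * i + j" using e0 by simp
  have "((n - 1) * i + j + i) mod n = j" unfolding e using assms by simp
  moreover have "((n - 1) * i + j + i) mod n = i" using d assms
    by (metis mod_add_left_eq mod_less add_0 dvd_imp_mod_0)
  ultimately show "i = j" by simp
qed

context kum begin

abbreviation "M c \<equiv> kummer_mult_mat p a c"

definition WW where "WW = mat p p (\<lambda>(k, i). (\<zeta> ^ k * \<alpha>) ^ i)"
definition WI where "WI = mat p p (\<lambda>(i, k). inverse (of_nat p) * inverse \<alpha> ^ i * (\<zeta> ^ ((p - 1) * i)) ^ k)"
definition DD where "DD c = mat p p (\<lambda>(k, l). if k = l then qp p c (\<zeta> ^ k * \<alpha>) else 0)"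

lemma root_p: "(\<zeta> ^ k * \<alpha>) ^ p = a"
  by (simp add: power_mult_distrib alp flip: power_mult) (simp add: mult.commute[of k] power_mult zp)

lemma WIW: "WI * WW = 1\<^sub>m p"
proof (rule eq_matI)
  fix i j assume i: "i < dim_row (1\<^sub>m p)" and j: "j < dim_col (1\<^sub>m p)"
  hence i: "i < p" and j: "j < p" by auto
  have "(WI * WW) $$ (i, j) = (\<Sum>k = 0..<p. WI $$ (i, k) * WW $$ (k, j))"
    using i j by (simp add: WI_def WW_def scalar_prod_def)
  also have "\<dots> = (\<Sum>k<p. inverse (of_nat p) * inverse \<alpha> ^ i * \<alpha> ^ j * (\<zeta> ^ ((p - 1) * i + j)) ^ k)"
  proof (rule sum.cong)
    fix k assume k: "k \<in> {..<p}"
    have "WI $$ (i, k) * WW $$ (k, j) = inverse (of_nat p) * inverse \<alpha> ^ i * (\<zeta> ^ ((p - 1) * i)) ^ k * (\<zeta> ^ k * \<alpha>) ^ j"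
      using i j k by (simp add: WI_def WW_def)
    also have "\<dots> = inverse (of_nat p) * inverse \<alpha> ^ i * \<alpha> ^ j * ((\<zeta> ^ ((p - 1) * i)) ^ k * (\<zeta> ^ j) ^ k)"
      by (simp add: power_mult_distrib mult_ac flip: power_mult)
    also have "\<dots> = inverse (of_nat p) * inverse \<alpha> ^ i * \<alpha> ^ j * (\<zeta> ^ ((p - 1) * i + j)) ^ k"
      by (simp add: power_add power_mult_distrib)
    finally show "WI $$ (i, k) * WW $$ (k, j) = inverse (of_nat p) * inverse \<alpha> ^ i * \<alpha> ^ j * (\<zeta> ^ ((p - 1) * i + j)) ^ k" .
  qed (auto simp: lessThan_atLeast0)
  also have "\<dots> = inverse (of_nat p) * inverse \<alpha> ^ i * \<alpha> ^ j * (\<Sum>k<p. (\<zeta> ^ ((p - 1) * i + j)) ^ k)"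
    by (simp add: sum_distrib_left)
  also have "\<dots> = (if i = j then 1 else 0)"
    using geom[of "(p - 1) * i + j"] dvd_lemma[OF i j] pne0 al0
    by (auto simp: power_inverse field_simps)
  also have "\<dots> = 1\<^sub>m p $$ (i, j)" using i j by simp
  finally show "(WI * WW) $$ (i, j) = 1\<^sub>m p $$ (i, j)" .
qed (auto simp: WI_def WW_def)

lemma detWW: "det WW \<noteq> 0"
proof -
  have "det WI * det WW = 1"
    using det_mult[of WI p WW] WIW by (simp add: WI_def WW_def)
  thus ?thesis by auto
qed

lemma WM: "WW * M c = DD c * WW"
proof (rule eq_matI)
  fix k j assume "k < dim_row (DD c * WW)" "j < dim_col (DD c * WW)"
  hence k: "k < p" and j: "j < p" by (auto simp: DD_def WW_def)
  have "(WW * M c) $$ (k, j) = (\<Sum>i = 0..<p. WW $$ (k, i) * M c $$ (i, j))"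
    using k j by (simp add: WW_def kummer_mult_mat_def scalar_prod_def)
  also have "\<dots> = (\<Sum>i<p. M c $$ (i, j) * (\<zeta> ^ k * \<alpha>) ^ i)"
    using k by (intro sum.cong) (auto simp: WW_def)
  also have "\<dots> = qp p c (\<zeta> ^ k * \<alpha>) * (\<zeta> ^ k * \<alpha>) ^ j"
    by (rule KL[OF root_p j])
  also have "\<dots> = (\<Sum>l = 0..<p. DD c $$ (k, l) * WW $$ (l, j))"
  proof -
    have "(\<Sum>l = 0..<p. DD c $$ (k, l) * WW $$ (l, j)) = (\<Sum>l = 0..<p. if l = k then qp p c (\<zeta> ^ k * \<alpha>) * (\<zeta> ^ k * \<alpha>) ^ j else 0)"
      using k j by (intro sum.cong) (auto simp: DD_def WW_def)
    also have "\<dots> = qp p c (\<zeta> ^ k * \<alpha>) * (\<zeta> ^ k * \<alpha>) ^ j" using k by simp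
    finally show ?thesis by simp
  qed
  also have "\<dots> = (DD c * WW) $$ (k, j)"
    using k j by (simp add: DD_def WW_def scalar_prod_def)
  finally show "(WW * M c) $$ (k, j) = (DD c * WW) $$ (k, j)" .
qed (auto simp: DD_def WW_def kummer_mult_mat_def)

lemma det_M: "det (M c) = (\<Prod>k<p. qp p c (\<zeta> ^ k * \<alpha>))"
proof -
  have c1: "WW \<in> carrier_mat p p" "M c \<in> carrier_mat p p" "DD c \<in> carrier_mat p p"
    by (auto simp: WW_def DD_def kummer_mult_mat_def)
  have "det WW * det (M c) = det (WW * M c)" using det_mult[OF c1(1) c1(2)] by simp
  also have "\<dots> = det (DD c * WW)" using WM[of c] by simp
  also have "\<dots> = det WW * det (DD c)" using det_mult[OF c1(3) c1(1)] by simp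
  finally have "det WW * det (M c) = det WW * det (DD c)" .
  hence e: "det (M c) = det (DD c)" using detWW by simp
  have "det (DD c) = prod_list (diag_mat (DD c))"
    by (rule det_upper_triangular[OF _ c1(3)]) (auto simp: upper_triangular_def DD_def)
  also have "\<dots> = (\<Prod>k<p. qp p c (\<zeta> ^ k * \<alpha>))"
  proof -
    have "diag_mat (DD c) = map (\<lambda>k. qp p c (\<zeta> ^ k * \<alpha>)) [0..<p]"
      by (auto simp: diag_mat_def DD_def)
    thus ?thesis by (simp add: prod.distinct_set_conv_list[symmetric] lessThan_atLeast0)
  qed
  finally show ?thesis using e by simp
qed

end



lemma sf_det:
  assumes L: "subfield_of L" and A: "A \<in> carrier_mat n n" and e: "\<And>i j. i < n \<Longrightarrow> j < n \<Longrightarrow> A $$ (i, j) \<in> L"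
  shows "det A \<in> L"
proof -
  have s: "\<And>q. (signof q :: 'a) \<in> L" using L by (auto simp: sign_def intro: sf1 sfuminus)
  show ?thesis unfolding det_def'[OF A]
  proof (rule sfsum[OF L], rule sfmult[OF L s], rule sfprod[OF L])
    fix q i assume q: "q \<in> {q. q permutes {0..<n}}" and i: "i \<in> {0..<n}"
    have "q i \<in> {0..<n}" using q i permutes_in_image by fastforce
    thus "A $$ (i, q i) \<in> L" using i e by auto
  qed
qed

lemma qp_cong: "(\<And>i. i < n \<Longrightarrow> c i = d i) \<Longrightarrow> qp n c \<beta> = qp n d \<beta>"
  by (simp add: qp_def)

lemma qp_add: "qp n c \<beta> + qp n d \<beta> = qp n (\<lambda>i. c i + d i) \<beta>"
  by (simp add: qp_def sum.distrib distrib_right)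

lemma qp_uminus: "- qp n c \<beta> = qp n (\<lambda>i. - c i) \<beta>"
  by (simp add: qp_def sum_negf)

lemma qp_smult: "f * qp n c \<beta> = qp n (\<lambda>i. f * c i) \<beta>"
  by (simp add: qp_def sum_distrib_left mult_ac)

lemma qp_delta: "k < n \<Longrightarrow> qp n (\<lambda>i. if i = k then f else 0) \<beta> = f * \<beta> ^ k"
proof -
  assume k: "k < n"
  have "(\<Sum>i<n. (if i = k then f else 0) * \<beta> ^ i) = (\<Sum>i<n. if i = k then f * \<beta> ^ k else 0)"
    by (rule sum.cong) auto
  thus ?thesis using k by (simp add: qp_def)
qed

lemma qp_const: "0 < n \<Longrightarrow> qp n (\<lambda>i. if i = 0 then f else 0) \<beta> = f"
  using qp_delta[of 0 n f \<beta>] by simp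

lemma qp_X: "1 < n \<Longrightarrow> qp n (\<lambda>i. if i = 1 then 1 else 0) \<beta> = \<beta>"
  using qp_delta[of 1 n 1 \<beta>] by simp

lemma qp_zero: "(\<And>i. i < n \<Longrightarrow> c i = 0) \<Longrightarrow> qp n c \<beta> = 0"
  by (simp add: qp_def)

context kum begin

definition PP where "PP = {qp p c \<alpha> | c. \<forall>i<p. c i \<in> F}"

lemma pow_conj: "(\<zeta> ^ k * \<alpha>) ^ i = \<zeta> ^ (k * i) * \<alpha> ^ i"
  by (simp add: power_mult_distrib power_mult)

lemma qp_conj: "qp p c (\<zeta> ^ k * \<alpha>) = qp p (\<lambda>i. c i * \<zeta> ^ (k * i)) \<alpha>"
  unfolding qp_def pow_conj by (simp add: mult_ac)

lemma M_F: assumes "\<forall>i<p. c i \<in> F" "i < p" "j < p" shows "M c $$ (i, j) \<in> F"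
proof (cases "j \<le> i")
  case True
  then show ?thesis using assms by (simp add: kummer_mult_mat_def)
next
  case False
  hence "p + i - j < p" using assms by simp
  hence "c (p + i - j) \<in> F" using assms by simp
  then show ?thesis using assms False aF by (simp add: kummer_mult_mat_def sfmult[OF sub])
qed

lemma det_F: "(\<forall>i<p. c i \<in> F) \<Longrightarrow> det (M c) \<in> F"
  apply (rule sf_det[OF sub, of _ p])
   apply (simp add: kummer_mult_mat_def)
  using M_F by blast

lemma mulc_F: "(\<forall>i<p. c i \<in> F) \<Longrightarrow> (\<forall>i<p. d i \<in> F) \<Longrightarrow> (\<forall>i<p. mulc p a c d i \<in> F)"
  by (auto simp: mulc_def intro!: sfsum[OF sub] sfmult[OF sub] M_F)

lemma rigid_det:
  assumes c: "\<forall>i<p. c i \<in> F" and nz: "\<exists>i<p. c i \<noteq> 0"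
  shows "\<exists>k<p. \<exists>y \<in> F - {0}. det (M c) = a ^ k * y ^ p"
proof -
  have "p_rigid_elt F p a" using rig aF a0 anp by (auto simp: p_rigid_def)
  hence sub: "norm_group F p a \<subseteq> (\<Union>k<p. (\<lambda>y. a ^ k * y) ` pth_powers F p)"
    by (simp add: p_rigid_elt_def)
  have "det (M c) \<in> norm_group F p a" using c nz by (auto simp: norm_group_def)
  with sub obtain k w where k: "k < p" and w: "w \<in> pth_powers F p" and e: "det (M c) = a ^ k * w" by blast
  from w obtain y where "y \<in> F - {0}" "w = y ^ p" by (auto simp: pth_powers_def)
  thus ?thesis using k e by blast
qed

lemma det_nz: "\<forall>i<p. c i \<in> F \<Longrightarrow> \<exists>i<p. c i \<noteq> 0 \<Longrightarrow> det (M c) \<noteq> 0"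
  using rigid_det[of c] a0 by fastforce

lemma conj_nz:
  assumes "\<forall>i<p. c i \<in> F" "\<exists>i<p. c i \<noteq> 0" "k < p"
  shows "qp p c (\<zeta> ^ k * \<alpha>) \<noteq> 0"
  using det_nz[OF assms(1,2)] assms(3) by (auto simp: det_M)

lemma qp_nz_coeff: "qp p c \<alpha> \<noteq> 0 \<Longrightarrow> \<exists>i<p. c i \<noteq> 0"
  using qp_zero[of p c \<alpha>] by blast

lemma indep:
  assumes "\<forall>i<p. c i \<in> F" "\<forall>i<p. d i \<in> F" "qp p c \<alpha> = qp p d \<alpha>" "i < p"
  shows "c i = d i"
proof (rule ccontr)
  assume ne: "c i \<noteq> d i"
  let ?e = "\<lambda>i. c i + - d i"
  have "\<forall>i<p. ?e i \<in> F" using assms sub by (auto intro: sfadd sfuminus sfdiff)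
  moreover have "\<exists>i<p. ?e i \<noteq> 0" using ne assms(4) by (intro exI[of _ i]) auto
  ultimately have "qp p ?e (\<zeta> ^ 0 * \<alpha>) \<noteq> 0" using conj_nz[of ?e 0] p2 by simp
  moreover have "qp p ?e \<alpha> = qp p c \<alpha> - qp p d \<alpha>" by (simp add: qp_def sum_subtractf left_diff_distrib)
  hence "qp p ?e \<alpha> = 0" using assms(3) by simp
  ultimately show False by simp
qed

lemma PP_add: assumes "x \<in> PP" "y \<in> PP" shows "x + y \<in> PP"
proof -
  obtain c d where "\<forall>i<p. c i \<in> F" "\<forall>i<p. d i \<in> F" "x = qp p c \<alpha>" "y = qp p d \<alpha>"
    using assms by (auto simp: PP_def)
  hence "x + y = qp p (\<lambda>i. c i + d i) \<alpha>" "\<forall>i<p. c i + d i \<in> F" using qp_add sfadd[OF sub] by auto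
  thus ?thesis unfolding PP_def by blast
qed

lemma PP_uminus: assumes "x \<in> PP" shows "- x \<in> PP"
proof -
  obtain c where "\<forall>i<p. c i \<in> F" "x = qp p c \<alpha>"
    using assms by (auto simp: PP_def)
  hence "- x = qp p (\<lambda>i. - c i) \<alpha>" "\<forall>i<p. - c i \<in> F" using qp_uminus sfuminus[OF sub] by auto
  thus ?thesis unfolding PP_def by blast
qed

lemma PP_mult: assumes "x \<in> PP" "y \<in> PP" shows "x * y \<in> PP"
proof -
  obtain c d where c: "\<forall>i<p. c i \<in> F" "\<forall>i<p. d i \<in> F" "x = qp p c \<alpha>" "y = qp p d \<alpha>"
    using assms by (auto simp: PP_def)
  hence "x * y = qp p (mulc p a c d) \<alpha>" "\<forall>i<p. mulc p a c d i \<in> F"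
    using qp_mult[OF alp] mulc_F[OF c(1,2)] by auto
  thus ?thesis unfolding PP_def by blast
qed

lemma F_PP: "f \<in> F \<Longrightarrow> f \<in> PP"
proof -
  assume f: "f \<in> F"
  have "f = qp p (\<lambda>i. if i = 0 then f else 0) \<alpha>" using qp_const[of p f \<alpha>] p2 by simp
  moreover have "\<forall>i<p. (if i = 0 then f else 0) \<in> F" using sf0[OF sub] f by simp
  ultimately show ?thesis unfolding PP_def by blast
qed

lemma al_PP: "\<alpha> \<in> PP"
proof -
  have "\<alpha> = qp p (\<lambda>i. if i = 1 then 1 else 0) \<alpha>" using qp_X[of p \<alpha>] p2 by simp
  moreover have "\<forall>i<p. (if i = 1 then 1 else 0) \<in> F" using sf0[OF sub] sf1[OF sub] by simp
  ultimately show ?thesis unfolding PP_def by blast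
qed

lemma conj_PP: "\<forall>i<p. c i \<in> F \<Longrightarrow> qp p c (\<zeta> ^ k * \<alpha>) \<in> PP"
proof -
  assume c: "\<forall>i<p. c i \<in> F"
  have "\<forall>i<p. c i * \<zeta> ^ (k * i) \<in> F" using c sub zF by (auto intro!: sfmult sfpow)
  thus ?thesis unfolding PP_def qp_conj by blast
qed

lemma PP_prod: "(\<And>i. i \<in> A \<Longrightarrow> f i \<in> PP) \<Longrightarrow> prod f A \<in> PP"
  by (induction A rule: infinite_finite_induct) (auto intro: F_PP sf1[OF sub] PP_mult)

lemma PP_inv: assumes "x \<in> PP" shows "inverse x \<in> PP"
proof (cases "x = 0")
  case True then show ?thesis using F_PP sf0[OF sub] by simp
next
  case False
  obtain c where c: "\<forall>i<p. c i \<in> F" and x: "x = qp p c \<alpha>" using assms by (auto simp: PP_def)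
  have nz: "\<exists>i<p. c i \<noteq> 0" using qp_nz_coeff False x by simp
  define y where "y = (\<Prod>k\<in>{1..<p}. qp p c (\<zeta> ^ k * \<alpha>))"
  have yP: "y \<in> PP" unfolding y_def using c by (auto intro!: PP_prod conj_PP)
  have "{..<p} = insert 0 {1..<p}" using p2 by auto
  hence "det (M c) = qp p c (\<zeta> ^ 0 * \<alpha>) * y" unfolding det_M y_def by simp
  hence N: "det (M c) = x * y" using x by simp
  have N0: "det (M c) \<noteq> 0" using det_nz[OF c nz] .
  have "inverse x = y * inverse (det (M c))" using N N0 False by (simp add: field_simps)
  thus ?thesis using yP F_PP sfinv[OF sub det_F[OF c]] PP_mult by simp
qed

lemma PP_sub: "subfield_of PP"
proof -
  have "0 \<in> PP" "1 \<in> PP" using F_PP sf0[OF sub] sf1[OF sub] by auto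
  thus ?thesis unfolding subfield_of_def by (simp add: PP_add PP_mult PP_uminus PP_inv)
qed

lemma adjoin_eq: "adjoin F \<alpha> = PP"
proof
  show "adjoin F \<alpha> \<subseteq> PP" unfolding adjoin_def
    by (rule Inter_lower) (use PP_sub F_PP al_PP in auto)
  show "PP \<subseteq> adjoin F \<alpha>"
  proof
    fix x assume "x \<in> PP"
    then obtain c where c: "\<forall>i<p. c i \<in> F" and x: "x = qp p c \<alpha>" by (auto simp: PP_def)
    show "x \<in> adjoin F \<alpha>" unfolding adjoin_def
    proof (intro InterI, clarify)
      fix L assume L: "subfield_of L" "F \<subseteq> L" "\<alpha> \<in> L"
      show "x \<in> L" unfolding x qp_def using c L by (auto intro!: sfsum sfmult sfpow)
    qed
  qed
qed

end

context kum begin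

definition rep where "rep x = (SOME c. (\<forall>i<p. c i \<in> F) \<and> x = qp p c \<alpha>)"

lemma rep: "x \<in> PP \<Longrightarrow> (\<forall>i<p. rep x i \<in> F) \<and> x = qp p (rep x) \<alpha>"
proof -
  assume "x \<in> PP"
  hence "\<exists>c. (\<forall>i<p. c i \<in> F) \<and> x = qp p c \<alpha>" by (auto simp: PP_def)
  from someI_ex[OF this] show ?thesis unfolding rep_def .
qed

lemma rep_eq: "\<forall>i<p. c i \<in> F \<Longrightarrow> i < p \<Longrightarrow> rep (qp p c \<alpha>) i = c i"
proof -
  assume c: "\<forall>i<p. c i \<in> F" and i: "i < p"
  have x: "qp p c \<alpha> \<in> PP" using c by (auto simp: PP_def)
  have e: "qp p (rep (qp p c \<alpha>)) \<alpha> = qp p c \<alpha>" using conjunct2[OF rep[OF x], symmetric] .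
  show ?thesis using indep[OF conjunct1[OF rep[OF x]] c e i] .
qed

definition sg where "sg k x = qp p (rep x) (\<zeta> ^ k * \<alpha>)"

lemma sg_qp: "\<forall>i<p. c i \<in> F \<Longrightarrow> sg k (qp p c \<alpha>) = qp p c (\<zeta> ^ k * \<alpha>)"
  unfolding sg_def by (rule qp_cong) (simp add: rep_eq)

lemma PP_E: assumes "x \<in> PP" obtains c where "\<forall>i<p. c i \<in> F" "x = qp p c \<alpha>"
  using assms by (auto simp: PP_def)

lemma sg_PP: "x \<in> PP \<Longrightarrow> sg k x \<in> PP"
  unfolding sg_def using rep conj_PP by blast

lemma conj_nz':
  assumes "\<forall>i<p. c i \<in> F" "\<exists>i<p. c i \<noteq> 0"
  shows "qp p c (\<zeta> ^ k * \<alpha>) \<noteq> 0"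
proof -
  have "\<zeta> ^ k = \<zeta> ^ (k mod p)" by (rule zpow_mod)
  moreover have "k mod p < p" using p2 by simp
  ultimately show ?thesis using conj_nz[OF assms, of "k mod p"] by simp
qed

lemma sg_nz: "x \<in> PP \<Longrightarrow> x \<noteq> 0 \<Longrightarrow> sg k x \<noteq> 0"
proof -
  assume x: "x \<in> PP" "x \<noteq> 0"
  obtain c where c: "\<forall>i<p. c i \<in> F" "x = qp p c \<alpha>" using PP_E[OF x(1)] by blast
  have "\<exists>i<p. c i \<noteq> 0" using qp_nz_coeff c x by simp
  thus ?thesis using conj_nz'[OF c(1)] c sg_qp by simp
qed

lemma sg_mult: assumes "x \<in> PP" "y \<in> PP" shows "sg k (x * y) = sg k x * sg k y"
proof -
  obtain c where c: "\<forall>i<p. c i \<in> F" "x = qp p c \<alpha>" using PP_E[OF assms(1)] by blast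
  obtain d where d: "\<forall>i<p. d i \<in> F" "y = qp p d \<alpha>" using PP_E[OF assms(2)] by blast
  have "x * y = qp p (mulc p a c d) \<alpha>" using c d qp_mult[OF alp] by simp
  hence "sg k (x * y) = qp p (mulc p a c d) (\<zeta> ^ k * \<alpha>)" using sg_qp mulc_F[OF c(1) d(1)] by simp
  also have "\<dots> = qp p c (\<zeta> ^ k * \<alpha>) * qp p d (\<zeta> ^ k * \<alpha>)" using qp_mult[OF root_p] by simp
  finally show ?thesis using c d sg_qp by simp
qed

lemma sg_add: assumes "x \<in> PP" "y \<in> PP" shows "sg k (x + y) = sg k x + sg k y"
proof -
  obtain c where c: "\<forall>i<p. c i \<in> F" "x = qp p c \<alpha>" using PP_E[OF assms(1)] by blast
  obtain d where d: "\<forall>i<p. d i \<in> F" "y = qp p d \<alpha>" using PP_E[OF assms(2)] by blast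
  have cd: "\<forall>i<p. c i + d i \<in> F" using c d sfadd[OF sub] by auto
  have "x + y = qp p (\<lambda>i. c i + d i) \<alpha>" using c d qp_add by simp
  hence "sg k (x + y) = qp p (\<lambda>i. c i + d i) (\<zeta> ^ k * \<alpha>)" using sg_qp cd by simp
  also have "\<dots> = qp p c (\<zeta> ^ k * \<alpha>) + qp p d (\<zeta> ^ k * \<alpha>)" by (rule qp_add[symmetric])
  finally show ?thesis using c d sg_qp by simp
qed

lemma sg_F: "f \<in> F \<Longrightarrow> sg k f = f"
proof -
  assume f: "f \<in> F"
  have e: "f = qp p (\<lambda>i. if i = 0 then f else 0) \<alpha>" using qp_const[of p f \<alpha>] p2 by simp
  have c: "\<forall>i<p. (if i = 0 then f else 0) \<in> F" using sf0[OF sub] f by simp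
  show ?thesis using sg_qp[OF c, of k] e[symmetric] qp_const[of p f] p2 by simp
qed

lemma sg_al: "sg k \<alpha> = \<zeta> ^ k * \<alpha>"
proof -
  have e: "\<alpha> = qp p (\<lambda>i. if i = 1 then 1 else 0) \<alpha>" using qp_X[of p \<alpha>] p2 by simp
  have c: "\<forall>i<p. (if i = 1 then 1 else 0) \<in> F" using sf0[OF sub] sf1[OF sub] by simp
  show ?thesis using sg_qp[OF c, of k] e[symmetric] qp_X[of p] p2 by simp
qed

lemma sg_sg: assumes "x \<in> PP" shows "sg 1 (sg k x) = sg (Suc k) x"
proof -
  obtain c where c: "\<forall>i<p. c i \<in> F" "x = qp p c \<alpha>" using PP_E[OF assms(1)] by blast
  have c': "\<forall>i<p. c i * \<zeta> ^ (k * i) \<in> F" using c zF sub by (auto intro: sfmult sfpow)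
  have "sg k x = qp p (\<lambda>i. c i * \<zeta> ^ (k * i)) \<alpha>" using c sg_qp qp_conj by simp
  hence "sg 1 (sg k x) = qp p (\<lambda>i. c i * \<zeta> ^ (k * i)) (\<zeta> ^ 1 * \<alpha>)" using sg_qp[OF c'] by simp
  also have "\<dots> = qp p (\<lambda>i. c i * \<zeta> ^ (k * i) * \<zeta> ^ (1 * i)) \<alpha>" by (rule qp_conj)
  also have "\<dots> = qp p (\<lambda>i. c i * \<zeta> ^ (Suc k * i)) \<alpha>"
    by (simp add: qp_def power_add mult_ac)
  also have "\<dots> = sg (Suc k) x" using c sg_qp qp_conj by simp
  finally show ?thesis .
qed

lemma sg_0: "x \<in> PP \<Longrightarrow> sg 0 x = x"
proof -
  assume x: "x \<in> PP"
  have "sg 0 x = qp p (rep x) \<alpha>" by (simp add: sg_def)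
  thus ?thesis using conjunct2[OF rep[OF x]] by metis
qed

lemma sg_p: "x \<in> PP \<Longrightarrow> sg p x = x"
proof -
  assume x: "x \<in> PP"
  have "sg p x = qp p (rep x) \<alpha>" by (simp add: sg_def zp)
  thus ?thesis using conjunct2[OF rep[OF x]] by metis
qed

lemma sg_1: "sg k 1 = 1" by (rule sg_F[OF sf1[OF sub]])

lemma sg_inv: assumes "x \<in> PP" "x \<noteq> 0" shows "sg k (inverse x) = inverse (sg k x)"
proof -
  have e1: "sg k (x * inverse x) = sg k x * sg k (inverse x)" by (rule sg_mult[OF assms(1) PP_inv[OF assms(1)]])
  have e2: "x * inverse x = 1" using assms by simp
  have "sg k x * sg k (inverse x) = 1" using e1 unfolding e2 sg_1 by simp
  from inverse_unique[OF this] show ?thesis by simp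
qed

lemma PP_pow: "x \<in> PP \<Longrightarrow> x ^ n \<in> PP" by (rule sfpow[OF PP_sub])
lemma PP_powi: "x \<in> PP \<Longrightarrow> power_int x n \<in> PP" by (rule sfpowi[OF PP_sub])
lemma PP_div: "x \<in> PP \<Longrightarrow> y \<in> PP \<Longrightarrow> x / y \<in> PP" by (rule sfdiv[OF PP_sub])
lemma PP_prod': "(\<And>i. i \<in> A \<Longrightarrow> f i \<in> PP) \<Longrightarrow> prod f A \<in> PP" by (rule sfprod[OF PP_sub])

lemma sg_pow: "x \<in> PP \<Longrightarrow> sg k (x ^ n) = sg k x ^ n"
  by (induction n) (simp_all add: sg_1 sg_mult PP_pow)

lemma sg_powi: assumes "x \<in> PP" "x \<noteq> 0" shows "sg k (power_int x n) = power_int (sg k x) n"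
proof (cases "n \<ge> 0")
  case True
  hence "n = int (nat n)" by simp
  hence "power_int x n = x ^ nat n" "power_int (sg k x) n = sg k x ^ nat n" by (metis power_int_of_nat)+
  thus ?thesis using sg_pow assms by simp
next
  case False
  define m where "m = nat (- n)"
  have m: "n = - int m" using False m_def by simp
  have "sg k (power_int x n) = sg k (inverse (x ^ m))" using m by (simp add: power_int_minus)
  also have "\<dots> = inverse (sg k x ^ m)" using sg_inv[OF PP_pow[OF assms(1)]] assms sg_pow by simp
  finally show ?thesis using m by (simp add: power_int_minus)
qed

lemma sg_prod: "finite A \<Longrightarrow> (\<And>i. i \<in> A \<Longrightarrow> f i \<in> PP) \<Longrightarrow> sg k (prod f A) = (\<Prod>i\<in>A. sg k (f i))"
proof (induction A rule: finite_induct)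
  case empty then show ?case by (simp add: sg_1)
next
  case (insert j A)
  have "sg k (prod f (insert j A)) = sg k (f j * prod f A)" using insert by simp
  also have "\<dots> = sg k (f j) * sg k (prod f A)" using insert by (intro sg_mult PP_prod') auto
  finally show ?case using insert by simp
qed

definition Nm where "Nm x = (\<Prod>k<p. sg k x)"

lemma Nm_det: "Nm x = det (M (rep x))"
  unfolding Nm_def det_M sg_def by simp

lemma Nm_F: "x \<in> PP \<Longrightarrow> Nm x \<in> F"
  unfolding Nm_det using rep det_F by blast

lemma Nm_rig: assumes "x \<in> PP" "x \<noteq> 0" shows "\<exists>k<p. \<exists>y\<in>F - {0}. Nm x = a ^ k * y ^ p"
proof -
  have "\<exists>i<p. rep x i \<noteq> 0" using qp_nz_coeff rep[OF assms(1)] assms(2) by metis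
  thus ?thesis unfolding Nm_det using rigid_det rep[OF assms(1)] by blast
qed

lemma Nm_nz: "x \<in> PP \<Longrightarrow> x \<noteq> 0 \<Longrightarrow> Nm x \<noteq> 0"
  unfolding Nm_def using sg_nz by simp

lemma Nm_mult: "x \<in> PP \<Longrightarrow> y \<in> PP \<Longrightarrow> Nm (x * y) = Nm x * Nm y"
  unfolding Nm_def by (simp add: sg_mult prod.distrib)

lemma Nm_pow: "x \<in> PP \<Longrightarrow> Nm (x ^ n) = Nm x ^ n"
  unfolding Nm_def by (simp add: sg_pow prod_power_distrib)

lemma Nm_Fel: "f \<in> F \<Longrightarrow> Nm f = f ^ p"
  unfolding Nm_def by (simp add: sg_F)

lemma sum_odd: "(\<Sum>k<Suc (2 * t). k) = (2 * t + 1) * t"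
  by (induction t) (auto simp: algebra_simps)

lemma Nm_al: "Nm \<alpha> = a"
proof -
  from odd obtain t where "p = 2 * t + 1" by (rule oddE)
  hence t: "p = Suc (2 * t)" by simp
  have "Nm \<alpha> = (\<Prod>k<p. \<zeta> ^ k) * \<alpha> ^ p" unfolding Nm_def sg_al by (simp add: prod.distrib)
  also have "(\<Prod>k<p. \<zeta> ^ k) = \<zeta> ^ (\<Sum>k<p. k)" by (simp add: power_sum)
  also have "(\<Sum>k<p. k) = p * t" using t sum_odd[of t] by simp
  also have "\<zeta> ^ (p * t) = 1" by (simp add: power_mult zp)
  finally show ?thesis using alp by simp
qed

end


context kum begin

lemma sg_0el: "sg k 0 = 0" by (rule sg_F[OF sf0[OF sub]])

lemma sg_sum: "finite A \<Longrightarrow> (\<And>i. i \<in> A \<Longrightarrow> f i \<in> PP) \<Longrightarrow> sg k (sum f A) = (\<Sum>i\<in>A. sg k (f i))"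
proof (induction A rule: finite_induct)
  case empty then show ?case by (simp add: sg_0el)
next
  case (insert j A)
  have "sg k (sum f (insert j A)) = sg k (f j + sum f A)" using insert by simp
  also have "\<dots> = sg k (f j) + sg k (sum f A)" using insert by (intro sg_add sfsum[OF PP_sub]) auto
  finally show ?case using insert by simp
qed

lemma geom_i: "i < p \<Longrightarrow> (\<Sum>j<p. (\<zeta> ^ i) ^ j) = (if i = 0 then of_nat p else 0)"
proof -
  assume i: "i < p"
  have "p dvd i \<longleftrightarrow> i = 0" using i by (auto dest: dvd_imp_le)
  thus ?thesis using geom[of i] by simp
qed

lemma H90:
  assumes x: "x \<in> PP" "x \<noteq> 0" and N: "Nm x = 1"
  shows "\<exists>z\<in>PP. z \<noteq> 0 \<and> x = sg 1 z / z"
proof -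
  define xs where "xs i = (\<Prod>j<i. sg j x)" for i
  have xsP: "\<And>i. xs i \<in> PP" unfolding xs_def using sg_PP x by (auto intro: PP_prod')
  have xs0: "xs 0 = 1" by (simp add: xs_def)
  have xsp: "xs p = 1" using N by (simp add: xs_def Nm_def)
  define b where "b c = (\<Sum>i<p. xs i * sg i c)" for c
  have bP: "\<And>c. c \<in> PP \<Longrightarrow> b c \<in> PP" unfolding b_def using xsP sg_PP
    by (auto intro!: sfsum[OF PP_sub] PP_mult)
  have sgxs: "\<And>i. x * sg 1 (xs i) = xs (Suc i)"
  proof -
    fix i
    have "sg 1 (xs i) = (\<Prod>j<i. sg 1 (sg j x))" unfolding xs_def
      using sg_PP x by (intro sg_prod) auto
    also have "\<dots> = (\<Prod>j<i. sg (Suc j) x)" using sg_sg x by simp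
    finally have "x * sg 1 (xs i) = sg 0 x * (\<Prod>j<i. sg (Suc j) x)" using sg_0 x by simp
    also have "\<dots> = xs (Suc i)" unfolding xs_def by (rule prod.lessThan_Suc_shift[symmetric])
    finally show "x * sg 1 (xs i) = xs (Suc i)" .
  qed
  have key: "\<And>c. c \<in> PP \<Longrightarrow> x * sg 1 (b c) = b c"
  proof -
    fix c assume c: "c \<in> PP"
    define g where "g i = xs i * sg i c" for i
    have "sg 1 (b c) = (\<Sum>i<p. sg 1 (xs i * sg i c))" unfolding b_def
      using xsP sg_PP c by (intro sg_sum) (auto intro: PP_mult)
    also have "\<dots> = (\<Sum>i<p. sg 1 (xs i) * sg (Suc i) c)"
      using xsP sg_PP c sg_mult sg_sg by (intro sum.cong) auto
    finally have "x * sg 1 (b c) = (\<Sum>i<p. x * sg 1 (xs i) * sg (Suc i) c)"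
      by (simp add: sum_distrib_left mult.assoc)
    also have "\<dots> = (\<Sum>i<p. g (Suc i))" unfolding g_def sgxs by simp
    also have "\<dots> = (\<Sum>i<p. g i)"
    proof -
      have "(\<Sum>i<Suc p. g i) = g 0 + (\<Sum>i<p. g (Suc i))" by (rule sum.lessThan_Suc_shift)
      moreover have "(\<Sum>i<Suc p. g i) = (\<Sum>i<p. g i) + g p" by simp
      moreover have "g 0 = c" unfolding g_def xs0 using sg_0 c by simp
      moreover have "g p = c" unfolding g_def xsp using sg_p c by simp
      ultimately show ?thesis by (simp add: add.commute)
    qed
    finally show "x * sg 1 (b c) = b c" unfolding b_def g_def .
  qed
  have ex: "\<exists>j<p. b (\<alpha> ^ j) \<noteq> 0"
  proof (rule ccontr)
    assume "\<not> ?thesis"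
    hence z: "\<And>j. j < p \<Longrightarrow> b (\<alpha> ^ j) = 0" by auto
    have bj: "b (\<alpha> ^ j) = \<alpha> ^ j * (\<Sum>i<p. xs i * (\<zeta> ^ j) ^ i)" for j
    proof -
      have "\<And>i. sg i (\<alpha> ^ j) = (\<zeta> ^ j) ^ i * \<alpha> ^ j"
        using sg_pow[OF al_PP] sg_al by (simp add: power_mult_distrib flip: power_mult) (simp add: mult.commute)
      thus ?thesis unfolding b_def by (simp add: sum_distrib_left mult_ac)
    qed
    have "\<And>j. j < p \<Longrightarrow> (\<Sum>i<p. xs i * (\<zeta> ^ j) ^ i) = 0" using z bj al0 by simp
    hence "(\<Sum>j<p. \<Sum>i<p. xs i * (\<zeta> ^ j) ^ i) = 0" by simp
    moreover have "(\<Sum>j<p. \<Sum>i<p. xs i * (\<zeta> ^ j) ^ i) = (\<Sum>i<p. xs i * (\<Sum>j<p. (\<zeta> ^ i) ^ j))"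
    proof -
      have "(\<Sum>j<p. \<Sum>i<p. xs i * (\<zeta> ^ j) ^ i) = (\<Sum>i<p. \<Sum>j<p. xs i * (\<zeta> ^ j) ^ i)" by (rule sum.swap)
      also have "\<dots> = (\<Sum>i<p. xs i * (\<Sum>j<p. (\<zeta> ^ i) ^ j))"
        by (simp add: sum_distrib_left flip: power_mult) (simp add: mult.commute)
      finally show ?thesis .
    qed
    moreover have "(\<Sum>i<p. xs i * (\<Sum>j<p. (\<zeta> ^ i) ^ j)) = (\<Sum>i<p. if i = 0 then of_nat p else 0)"
      using geom_i xs0 by (intro sum.cong) auto
    moreover have "(\<Sum>i<p. if i = 0 then (of_nat p::'a) else 0) = of_nat p" using p2 by simp
    ultimately show False using pne0 by simp
  qed
  then obtain j where j: "b (\<alpha> ^ j) \<noteq> 0" by blast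
  define bb where "bb = b (\<alpha> ^ j)"
  have bbP: "bb \<in> PP" unfolding bb_def by (rule bP[OF PP_pow[OF al_PP]])
  have bb0: "bb \<noteq> 0" using j bb_def by simp
  have sbb0: "sg 1 bb \<noteq> 0" using sg_nz bbP bb0 by simp
  have xe: "x = bb / sg 1 bb" using key[OF PP_pow[OF al_PP], of j] sbb0 unfolding bb_def[symmetric]
    by (simp add: field_simps)
  have "sg 1 (inverse bb) / inverse bb = bb / sg 1 bb" using sg_inv[OF bbP bb0] bb0 sbb0 by (simp add: field_simps)
  thus ?thesis using xe PP_inv[OF bbP] bb0 by (intro bexI[of _ "inverse bb"]) auto
qed

definition D where "D z = sg 1 z / z"

lemma D_PP: "z \<in> PP \<Longrightarrow> z \<noteq> 0 \<Longrightarrow> D z \<in> PP \<and> D z \<noteq> 0"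
  unfolding D_def using sg_PP sg_nz PP_div by simp

lemma D_F: assumes "c \<in> F" "c \<noteq> 0" "u \<in> PP" "u \<noteq> 0" shows "D (c * u) = D u"
proof -
  have "sg 1 (c * u) = c * sg 1 u" using sg_mult[OF F_PP[OF assms(1)] assms(3)] sg_F[OF assms(1)] by simp
  thus ?thesis unfolding D_def using assms by simp
qed

lemma D_al: assumes "u \<in> PP" "u \<noteq> 0" shows "D (\<alpha> ^ k * u) = \<zeta> ^ k * D u"
proof -
  have "sg 1 (\<alpha> ^ k * u) = (\<zeta> * \<alpha>) ^ k * sg 1 u"
    using sg_mult[OF PP_pow[OF al_PP] assms(1)] sg_pow[OF al_PP] sg_al[of 1] by simp
  thus ?thesis unfolding D_def using assms al0 by (simp add: power_mult_distrib)
qed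

lemma claimA:
  assumes x: "x \<in> PP" "x \<noteq> 0"
  shows "\<exists>k f z. f \<in> F \<and> f \<noteq> 0 \<and> z \<in> PP \<and> z \<noteq> 0 \<and> x = \<alpha> ^ k * f * D z"
proof -
  obtain k y where k: "k < p" and y: "y \<in> F" "y \<noteq> 0" and N: "Nm x = a ^ k * y ^ p"
    using Nm_rig[OF x] by blast
  define w where "w = \<alpha> ^ k * y"
  have wP: "w \<in> PP" unfolding w_def using PP_mult PP_pow al_PP F_PP y by simp
  have w0: "w \<noteq> 0" unfolding w_def using al0 y by simp
  have Nw: "Nm w = a ^ k * y ^ p" unfolding w_def
    using Nm_mult[OF PP_pow[OF al_PP] F_PP[OF y(1)]] Nm_pow[OF al_PP] Nm_al Nm_Fel[OF y(1)] by simp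
  define x1 where "x1 = x / w"
  have x1P: "x1 \<in> PP" unfolding x1_def using PP_div x wP by simp
  have x10: "x1 \<noteq> 0" unfolding x1_def using x w0 by simp
  have "Nm x = Nm (x1 * w)" unfolding x1_def using w0 by simp
  also have "\<dots> = Nm x1 * Nm w" using Nm_mult x1P wP by simp
  finally have "Nm x1 = 1" using N Nw a0 y by simp
  then obtain z where z: "z \<in> PP" "z \<noteq> 0" "x1 = sg 1 z / z" using H90[OF x1P x10] by blast
  have "x = \<alpha> ^ k * y * D z" using z w0 unfolding D_def[symmetric] x1_def w_def by (simp add: field_simps)
  thus ?thesis using y z by blast
qed

lemma Dn_PP: "z \<in> PP \<Longrightarrow> z \<noteq> 0 \<Longrightarrow> (D ^^ n) z \<in> PP \<and> (D ^^ n) z \<noteq> 0"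
  by (induction n) (auto dest: D_PP)

lemma Dn_F: assumes "c \<in> F" "c \<noteq> 0" "u \<in> PP" "u \<noteq> 0"
  shows "\<exists>c'. c' \<in> F \<and> c' \<noteq> 0 \<and> (D ^^ n) (c * u) = c' * (D ^^ n) u"
proof (cases n)
  case 0 then show ?thesis using assms by auto
next
  case (Suc m)
  have "(D ^^ Suc m) (c * u) = (D ^^ m) (D (c * u))" by (simp add: funpow_Suc_right del: funpow.simps)
  also have "\<dots> = (D ^^ m) (D u)" using D_F assms by simp
  also have "\<dots> = (D ^^ Suc m) u" by (simp add: funpow_Suc_right del: funpow.simps)
  finally show ?thesis using Suc sf1[OF sub] by (intro exI[of _ 1]) simp
qed

lemma iter:
  "x \<in> PP \<Longrightarrow> x \<noteq> 0 \<Longrightarrow> \<exists>k f z. f \<in> F \<and> f \<noteq> 0 \<and> z \<in> PP \<and> z \<noteq> 0 \<and> x = \<alpha> ^ k * f * (D ^^ Suc n) z"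
proof (induction n arbitrary: x)
  case 0 then show ?case using claimA by simp
next
  case (Suc n)
  obtain k f z where f: "f \<in> F" "f \<noteq> 0" and z: "z \<in> PP" "z \<noteq> 0" and x: "x = \<alpha> ^ k * f * (D ^^ Suc n) z"
    using Suc by blast
  obtain k' f' z' where f': "f' \<in> F" "f' \<noteq> 0" and z': "z' \<in> PP" "z' \<noteq> 0" and ze: "z = \<alpha> ^ k' * f' * D z'"
    using claimA[OF z] by blast
  have Dz': "D z' \<in> PP" "D z' \<noteq> 0" using D_PP z' by auto
  have fDz: "f' * D z' \<in> PP" "f' * D z' \<noteq> 0" using PP_mult F_PP f' Dz' by auto
  have "D z = \<zeta> ^ k' * D (f' * D z')" unfolding ze mult.assoc by (rule D_al[OF fDz])
  also have "D (f' * D z') = D (D z')" by (rule D_F[OF f' Dz'])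
  finally have Dz: "D z = \<zeta> ^ k' * D (D z')" .
  have zk: "\<zeta> ^ k' \<in> F" "\<zeta> ^ k' \<noteq> 0" using zF sub z0 by (auto intro: sfpow)
  have DDz: "D (D z') \<in> PP" "D (D z') \<noteq> 0" using D_PP Dz' by auto
  obtain c' where c': "c' \<in> F" "c' \<noteq> 0" "(D ^^ n) (\<zeta> ^ k' * D (D z')) = c' * (D ^^ n) (D (D z'))"
    using Dn_F[OF zk DDz, of n] by blast
  have "(D ^^ Suc n) z = (D ^^ n) (D z)" by (simp add: funpow_Suc_right del: funpow.simps)
  also have "\<dots> = c' * (D ^^ n) (D (D z'))" using Dz c' by simp
  also have "(D ^^ n) (D (D z')) = (D ^^ Suc (Suc n)) z'" by (simp add: funpow_Suc_right del: funpow.simps)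
  finally have "x = \<alpha> ^ k * (f * c') * (D ^^ Suc (Suc n)) z'" using x by (simp add: mult_ac)
  moreover have "f * c' \<in> F" "f * c' \<noteq> 0" using f c' sfmult[OF sub] by auto
  ultimately show ?case using z' by blast
qed

definition ex :: "nat \<Rightarrow> nat \<Rightarrow> int" where "ex n j = (- 1) ^ (n - j) * int (n choose j)"

lemma ex_pascal: "ex (Suc n) (Suc j) = ex n j - ex n (Suc j)"
proof (cases "j < n")
  case True
  hence "n - j = Suc (n - Suc j)" by simp
  thus ?thesis unfolding ex_def by (simp add: algebra_simps)
next
  case False
  hence "n choose Suc j = 0" by simp
  thus ?thesis unfolding ex_def by simp
qed

lemma Dn_formula: assumes u: "u \<in> PP" "u \<noteq> 0"
  shows "(D ^^ n) u = (\<Prod>j\<le>n. power_int (sg j u) (ex n j))"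
proof (induction n)
  case 0 then show ?case using sg_0[OF u(1)] by (simp add: ex_def)
next
  case (Suc n)
  have sP: "\<And>j. sg j u \<in> PP" "\<And>j. sg j u \<noteq> 0" using sg_PP sg_nz u by auto
  define P where "P = (\<Prod>j\<le>n. power_int (sg j u) (ex n j))"
  have PP': "P \<in> PP" unfolding P_def using sP by (intro PP_prod' PP_powi) auto
  have P0: "P \<noteq> 0" unfolding P_def using sP by simp
  have s1: "sg 1 P = (\<Prod>j\<le>n. power_int (sg (Suc j) u) (ex n j))"
  proof -
    have "sg 1 P = (\<Prod>j\<le>n. sg 1 (power_int (sg j u) (ex n j)))" unfolding P_def
      using sP by (intro sg_prod PP_powi) auto
    also have "\<dots> = (\<Prod>j\<le>n. power_int (sg 1 (sg j u)) (ex n j))" using sP sg_powi by simp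
    finally show ?thesis using sg_sg u by simp
  qed
  have i1: "inverse P = (\<Prod>j\<le>n. power_int (sg j u) (- ex n j))"
    unfolding P_def by (simp add: power_int_minus prod_inversef[symmetric] comp_def)
  also have "\<dots> = (\<Prod>j\<le>Suc n. power_int (sg j u) (- ex n j))" by (simp add: ex_def binomial_eq_0)
  also have "\<dots> = power_int (sg 0 u) (- ex n 0) * (\<Prod>j\<le>n. power_int (sg (Suc j) u) (- ex n (Suc j)))"
    by (rule prod.atMost_Suc_shift)
  finally have i2: "inverse P = power_int (sg 0 u) (- ex n 0) * (\<Prod>j\<le>n. power_int (sg (Suc j) u) (- ex n (Suc j)))" .
  have "(D ^^ Suc n) u = D P" using Suc unfolding P_def by simp
  also have "\<dots> = sg 1 P * inverse P" unfolding D_def by (simp add: divide_inverse)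
  also have "\<dots> = power_int (sg 0 u) (- ex n 0) *
      (\<Prod>j\<le>n. power_int (sg (Suc j) u) (ex n j) * power_int (sg (Suc j) u) (- ex n (Suc j)))"
    unfolding s1 i2 by (simp add: prod.distrib mult_ac)
  also have "\<dots> = power_int (sg 0 u) (ex (Suc n) 0) * (\<Prod>j\<le>n. power_int (sg (Suc j) u) (ex (Suc n) (Suc j)))"
  proof -
    have "\<And>j. power_int (sg (Suc j) u) (ex n j) * power_int (sg (Suc j) u) (- ex n (Suc j))
       = power_int (sg (Suc j) u) (ex (Suc n) (Suc j))"
      using sP by (simp add: ex_pascal power_int_add[symmetric])
    moreover have "- ex n 0 = ex (Suc n) 0" by (simp add: ex_def)
    ultimately show ?thesis by simp
  qed
  also have "\<dots> = (\<Prod>j\<le>Suc n. power_int (sg j u) (ex (Suc n) j))"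
    by (rule prod.atMost_Suc_shift[symmetric])
  finally show ?case .
qed

lemma Dp_pow: assumes u: "u \<in> PP" "u \<noteq> 0"
  shows "\<exists>v\<in>PP. v \<noteq> 0 \<and> (D ^^ p) u = v ^ p"
proof -
  have sP: "\<And>j. sg j u \<in> PP" "\<And>j. sg j u \<noteq> 0" using sg_PP sg_nz u by auto
  define t where "t j = (- 1) ^ (p - j) * int ((p choose j) div p)" for j
  have tj: "\<And>j. j \<in> {1..<p} \<Longrightarrow> ex p j = t j * int p"
  proof -
    fix j assume j: "j \<in> {1..<p}"
    have "p dvd (p choose j)" using j prime by (intro dvd_choose_prime) auto
    hence "p choose j = (p choose j) div p * p" by simp
    hence "int (p choose j) = int ((p choose j) div p) * int p" by (metis of_nat_mult)
    thus "ex p j = t j * int p" unfolding ex_def t_def by simp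
  qed
  have sets: "{..p} = insert 0 (insert p {1..<p})" using p2 by auto
  have "(D ^^ p) u = (\<Prod>j\<le>p. power_int (sg j u) (ex p j))" by (rule Dn_formula[OF u])
  also have "\<dots> = power_int (sg 0 u) (ex p 0) * (power_int (sg p u) (ex p p) *
      (\<Prod>j\<in>{1..<p}. power_int (sg j u) (ex p j)))"
    unfolding sets using p2 by (simp add: prod.insert)
  also have "power_int (sg 0 u) (ex p 0) = inverse u" using sg_0[OF u(1)] odd
    by (simp add: ex_def power_int_minus)
  also have "power_int (sg p u) (ex p p) = u" using sg_p[OF u(1)] by (simp add: ex_def)
  also have "(\<Prod>j\<in>{1..<p}. power_int (sg j u) (ex p j)) = (\<Prod>j\<in>{1..<p}. power_int (sg j u) (t j)) ^ p"
    unfolding prod_power_distrib using tj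
    by (intro prod.cong refl) (simp add: power_int_mult)
  finally have e: "(D ^^ p) u = (\<Prod>j\<in>{1..<p}. power_int (sg j u) (t j)) ^ p" using u by simp
  have "(\<Prod>j\<in>{1..<p}. power_int (sg j u) (t j)) \<in> PP" using sP by (intro PP_prod' PP_powi) auto
  moreover have "(\<Prod>j\<in>{1..<p}. power_int (sg j u) (t j)) \<noteq> 0" using sP by simp
  ultimately show ?thesis using e by blast
qed

lemma main1: assumes "x \<in> PP" "x \<noteq> 0"
  shows "\<exists>k f v. f \<in> F \<and> f \<noteq> 0 \<and> v \<in> PP \<and> v \<noteq> 0 \<and> x = \<alpha> ^ k * f * v ^ p"
proof -
  have "Suc (p - 1) = p" using p2 by simp
  then obtain k f z where f: "f \<in> F" "f \<noteq> 0" and z: "z \<in> PP" "z \<noteq> 0" and x: "x = \<alpha> ^ k * f * (D ^^ p) z"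
    using iter[OF assms, of "p - 1"] by metis
  obtain v where v: "v \<in> PP" "v \<noteq> 0" "(D ^^ p) z = v ^ p" using Dp_pow[OF z] by blast
  have "x = \<alpha> ^ k * f * v ^ p" using x v(3) by simp
  thus ?thesis using f v(1,2) by blast
qed

lemma main2: assumes f: "f \<in> F" "f \<noteq> 0" and y: "y \<in> PP" "y \<noteq> 0" and e: "\<alpha> ^ k = f * y ^ p"
  shows "p dvd k"
proof (rule ccontr)
  assume nd: "\<not> p dvd k"
  have "Nm (\<alpha> ^ k) = a ^ k" using Nm_pow[OF al_PP] Nm_al by simp
  moreover have "Nm (f * y ^ p) = (f * Nm y) ^ p"
    using Nm_mult[OF F_PP[OF f(1)] PP_pow[OF y(1)]] Nm_pow[OF y(1)] Nm_Fel[OF f(1)] by (simp add: power_mult_distrib)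
  ultimately have ak: "a ^ k = (f * Nm y) ^ p" using e by simp
  define g where "g = f * Nm y"
  have gF: "g \<in> F" "g \<noteq> 0" unfolding g_def using f Nm_F[OF y(1)] Nm_nz[OF y] sfmult[OF sub] by auto
  have k0: "k \<noteq> 0"
  proof
    assume "k = 0"
    with nd show False by simp
  qed
  have "coprime p k" using prime nd by (intro prime_imp_coprime) auto
  hence "gcd k p = 1" by (simp add: coprime_iff_gcd_eq_1 gcd.commute)
  then obtain u v where uv: "k * u = p * v + 1" using bezout_nat[OF k0, of p] by auto
  have "a ^ (k * u) = (a ^ k) ^ u" by (simp add: power_mult)
  also have "\<dots> = (g ^ p) ^ u" using ak g_def by simp
  also have "\<dots> = g ^ (p * u)" by (simp add: power_mult)
  finally have "a ^ (k * u) = g ^ (p * u)" .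
  moreover have "a ^ (k * u) = a ^ (p * v) * a" unfolding uv by (simp add: power_add)
  ultimately have "a = g ^ (p * u) / a ^ (p * v)" using a0 by (simp add: field_simps)
  hence "a = (g ^ u / a ^ v) ^ p" by (simp add: power_mult mult.commute[of p] power_divide)
  moreover have "g ^ u / a ^ v \<in> F" "g ^ u / a ^ v \<noteq> 0" using gF aF a0 sub by (auto intro: sfdiv sfpow)
  ultimately have "a \<in> pth_powers F p" unfolding pth_powers_def by blast
  thus False using anp by simp
qed

end

lemma pclass_shift:
  assumes L: "subfield_of L" and v: "v \<in> L" "v \<noteq> 0"
  shows "pclass L n (x * v ^ n) = pclass L n x"
proof
  show "pclass L n (x * v ^ n) \<subseteq> pclass L n x"
  proof
    fix w assume "w \<in> pclass L n (x * v ^ n)"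
    then obtain y where y: "y \<in> L - {0}" "w = x * v ^ n * y ^ n" by (auto simp: pclass_def)
    hence "w = x * (v * y) ^ n" "v * y \<in> L - {0}" using v sfmult[OF L] by (auto simp: power_mult_distrib mult_ac)
    thus "w \<in> pclass L n x" unfolding pclass_def by blast
  qed
  show "pclass L n x \<subseteq> pclass L n (x * v ^ n)"
  proof
    fix w assume "w \<in> pclass L n x"
    then obtain y where y: "y \<in> L - {0}" "w = x * y ^ n" by (auto simp: pclass_def)
    hence "w = x * v ^ n * (y / v) ^ n" "y / v \<in> L - {0}" using v sfdiv[OF L] by (auto simp: power_divide)
    thus "w \<in> pclass L n (x * v ^ n)" unfolding pclass_def by blast
  qed
qed

lemma pclass_self: "subfield_of L \<Longrightarrow> x \<in> pclass L n x"
  unfolding pclass_def using sf1[of L] by (intro image_eqI[of _ _ 1]) auto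

theorem lemma3p14:
  fixes F :: "'a::field set" and p :: nat and a \<alpha> :: 'a
  assumes "subfield_of F"
    and "prime p" and "odd p"
    and "has_primitive_root_of_unity F p"
    and "p_rigid F p"
    and "a \<in> F - {0}" and "a \<notin> pth_powers F p"
    and "\<alpha> ^ p = a"
  shows "(\<forall>x \<in> adjoin F \<alpha> - {0}. \<exists>k::nat. \<exists>f \<in> F - {0}.
            pclass (adjoin F \<alpha>) p x = pclass (adjoin F \<alpha>) p (\<alpha> ^ k * f))
       \<and> (\<forall>k::nat. \<forall>f \<in> F - {0}.
            pclass (adjoin F \<alpha>) p (\<alpha> ^ k) = pclass (adjoin F \<alpha>) p f
            \<longrightarrow> pclass (adjoin F \<alpha>) p (\<alpha> ^ k) = pclass (adjoin F \<alpha>) p 1)"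
proof -
  obtain \<zeta> where z: "\<zeta> \<in> F" "\<zeta> ^ p = 1" "\<And>k. 0 < k \<Longrightarrow> k < p \<Longrightarrow> \<zeta> ^ k \<noteq> 1"
    using assms(4) unfolding has_primitive_root_of_unity_def by blast
  interpret K: kum F p a \<alpha> \<zeta>
    using assms z by unfold_locales auto
  have E: "adjoin F \<alpha> = K.PP" by (rule K.adjoin_eq)
  have P1: "\<forall>x \<in> K.PP - {0}. \<exists>k::nat. \<exists>f \<in> F - {0}. pclass K.PP p x = pclass K.PP p (\<alpha> ^ k * f)"
  proof
    fix x assume x: "x \<in> K.PP - {0}"
    then obtain k f v where f: "f \<in> F" "f \<noteq> 0" and v: "v \<in> K.PP" "v \<noteq> 0" and e: "x = \<alpha> ^ k * f * v ^ p"
      using K.main1 by blast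
    have "pclass K.PP p x = pclass K.PP p (\<alpha> ^ k * f)" unfolding e by (rule pclass_shift[OF K.PP_sub v])
    thus "\<exists>k::nat. \<exists>f \<in> F - {0}. pclass K.PP p x = pclass K.PP p (\<alpha> ^ k * f)" using f by blast
  qed
  have P2: "\<forall>k::nat. \<forall>f \<in> F - {0}. pclass K.PP p (\<alpha> ^ k) = pclass K.PP p f
            \<longrightarrow> pclass K.PP p (\<alpha> ^ k) = pclass K.PP p 1"
  proof (intro allI ballI impI)
    fix k f assume f: "f \<in> F - {0}" and eq: "pclass K.PP p (\<alpha> ^ k) = pclass K.PP p f"
    have "\<alpha> ^ k \<in> pclass K.PP p f" using eq pclass_self[OF K.PP_sub] by metis
    then obtain y where y: "y \<in> K.PP - {0}" "\<alpha> ^ k = f * y ^ p" by (auto simp: pclass_def)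
    have "p dvd k" using K.main2[of f y k] f y by auto
    then obtain m where m: "k = p * m" by auto
    have "\<alpha> ^ m \<in> K.PP" "\<alpha> ^ m \<noteq> 0" using K.PP_pow K.al_PP K.al0 by auto
    hence "pclass K.PP p (1 * (\<alpha> ^ m) ^ p) = pclass K.PP p 1" by (intro pclass_shift[OF K.PP_sub])
    thus "pclass K.PP p (\<alpha> ^ k) = pclass K.PP p 1" unfolding m by (simp add: power_mult mult.commute[of p])
  qed
  show ?thesis unfolding E using P1 P2 by blast
qed


end
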